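(* Let $\kappa,\lambda,\mu$ be cardinals. Then $\binom{\kappa}{\lambda}\rightarrow\binom{\kappa}{\mu}_2$ implies $\binom{\mathrm{cf}(\kappa)}{\lambda}\rightarrow\binom{\mathrm{cf}(\kappa)}{\mu}_2$.
   Context: Notation: $\binom{\lambda}{\kappa}\rightarrow\binom{\alpha}{\beta}_\chi$ means that for every coloring $c:\lambda\times\kappa\rightarrow\chi$ there are $A\subseteq\lambda$, $B\subseteq\kappa$ with $\mathrm{otp}(A)=\alpha$, $\mathrm{otp}(B)=\beta$ and $c\upharpoonright(A\times B)$ constant. *)

theory Defs
  imports Main
begin

text \<open>Cardinals and ordinals are represented as well-order relations (HOL's BNF
cardinal library); a cardinal is a relation r with Card_order r (an initial
well-order on Field r).  Order types are compared up to order-isomorphism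
(ordIso).\<close>

definition partition_rel ::
  "'a rel \<Rightarrow> 'b rel \<Rightarrow> 'c rel \<Rightarrow> 'd rel \<Rightarrow> nat \<Rightarrow> bool" where
  "partition_rel lam kap alpha beta chi \<longleftrightarrow>
     (\<forall>c :: 'a \<Rightarrow> 'b \<Rightarrow> nat.
        (\<forall>x\<in>Field lam. \<forall>y\<in>Field kap. c x y < chi) \<longrightarrow>
        (\<exists>A B. A \<subseteq> Field lam \<and> B \<subseteq> Field kap \<and>
               (Restr lam A, alpha) \<in> ordIso \<and> (Restr kap B, beta) \<in> ordIso \<and>
               (\<exists>i. \<forall>x\<in>A. \<forall>y\<in>B. c x y = i)))"

definition cofinal_in :: "'a rel \<Rightarrow> 'a set \<Rightarrow> bool" where
  "cofinal_in r X \<longleftrightarrow> X \<subseteq> Field r \<and> (\<forall>a\<in>Field r. \<exists>b\<in>X. (a, b) \<in> r)"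

definition is_cf :: "'a rel \<Rightarrow> 'd rel \<Rightarrow> bool" where
  "is_cf r rho \<longleftrightarrow> Well_order rho \<and>
     (\<exists>X. cofinal_in r X \<and> (rho, Restr r X) \<in> ordIso) \<and>
     (\<forall>X. cofinal_in r X \<longrightarrow> (rho, Restr r X) \<in> ordLeq)"

end

theory Submission
  imports Defs
begin

unbundle cardinal_syntax

lemma Restr_ordLeq_self:
  assumes W: "Well_order r"
  shows "Restr r A \<le>o r"
proof (rule ccontr)
  define A' where "A' = A \<inter> Field r"
  have RA: "Restr r A = Restr r A'" unfolding A'_def Field_def by auto
  have refl: "Refl r" using W by (simp add: order_on_defs)
  have FA: "Field (Restr r A') = A'" using Refl_Field_Restr2[OF refl] A'_def by auto
  have WA: "Well_order (Restr r A')" using Well_order_Restr[OF W] .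
  assume "\<not> Restr r A \<le>o r"
  hence "r <o Restr r A'" using RA not_ordLeq_iff_ordLess[OF W WA] by simp
  then obtain f where emb: "embed r (Restr r A') f" and nb: "\<not> bij_betw f (Field r) A'"
    unfolding ordLess_def embedS_def using FA by auto
  have cmp: "compat r (Restr r A') f" using embed_compat[OF emb] .
  have inj: "inj_on f (Field r)" using embed_inj_on[OF W emb] .
  have ofil: "wo_rel.ofilter (Restr r A') (f ` Field r)"
    using embed_Field_ofilter[OF W WA emb] .
  have fin: "\<And>x. x \<in> Field r \<Longrightarrow> f x \<in> A'"
    using embed_Field[OF emb] FA by auto
  have mono: "\<And>a b. (a,b) \<in> r \<Longrightarrow> (f a, f b) \<in> r"
    using cmp unfolding compat_def by auto
  have ge: "\<forall>x\<in>Field r. (x, f x) \<in> r"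
  proof (rule ccontr)
    assume "\<not> (\<forall>x\<in>Field r. (x, f x) \<in> r)"
    then obtain x0 where x0: "x0 \<in> {x\<in>Field r. (x, f x) \<notin> r}" by auto
    have wf: "wf (r - Id)" using W by (simp add: order_on_defs)
    obtain x where x: "x \<in> {x\<in>Field r. (x, f x) \<notin> r}"
      and mn: "\<And>y. (y, x) \<in> r - Id \<Longrightarrow> y \<notin> {x\<in>Field r. (x, f x) \<notin> r}"
      using wfE_min[OF wf x0] by blast
    have xF: "x \<in> Field r" and nx: "(x, f x) \<notin> r" using x by auto
    have fxF: "f x \<in> Field r" using fin[OF xF] A'_def by auto
    have tot: "Total r" using W by (simp add: order_on_defs)
    have "(f x, x) \<in> r" using tot xF fxF nx refl unfolding total_on_def refl_on_def by metis
    moreover have "f x \<noteq> x" using nx refl xF unfolding refl_on_def by auto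
    ultimately have "(f x, f (f x)) \<in> r" using mn[of "f x"] fxF by auto
    moreover have "(f (f x), f x) \<in> r" using mono \<open>(f x, x) \<in> r\<close> by auto
    moreover have "f (f x) \<noteq> f x" using inj fxF xF \<open>f x \<noteq> x\<close> unfolding inj_on_def by auto
    moreover have "antisym r" using W by (simp add: order_on_defs)
    ultimately show False unfolding antisym_def by metis
  qed
  have "f ` Field r \<subseteq> A'" using fin by auto
  moreover have "f ` Field r \<noteq> A'" using nb inj unfolding bij_betw_def by auto
  ultimately obtain a where aA: "a \<in> A'" and an: "a \<notin> f ` Field r" by auto
  have aF: "a \<in> Field r" using aA A'_def by auto
  have "(a, f a) \<in> Restr r A'" using ge aF fin aA by auto
  hence "a \<in> under (Restr r A') (f a)" unfolding under_def by auto
  moreover have "f a \<in> f ` Field r" using aF by auto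
  ultimately have "a \<in> f ` Field r"
    using ofil unfolding wo_rel.ofilter_def[OF WA[unfolded wo_rel_def[symmetric]]] by blast
  thus False using an by auto
qed


lemma full_subset_cofinal:
  assumes C: "Card_order k" and AF: "A \<subseteq> Field k" and I: "Restr k A =o k"
  shows "\<forall>a\<in>Field k. \<exists>b\<in>A. (a, b) \<in> k"
proof (rule ccontr)
  assume "\<not> (\<forall>a\<in>Field k. \<exists>b\<in>A. (a, b) \<in> k)"
  then obtain a where aF: "a \<in> Field k" and na: "\<forall>b\<in>A. (a, b) \<notin> k" by auto
  have W: "Well_order k" using C by (simp add: card_order_on_well_order_on)
  have refl: "Refl k" using W by (simp add: order_on_defs)
  have tot: "Total k" using W by (simp add: order_on_defs)
  have sub: "A \<subseteq> underS k a"
  proof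
    fix b assume bA: "b \<in> A"
    have bF: "b \<in> Field k" using AF bA by auto
    have "(a, b) \<notin> k" using na bA by auto
    moreover hence "a \<noteq> b" using refl aF unfolding refl_on_def by auto
    ultimately have "(b, a) \<in> k" using tot aF bF unfolding total_on_def by metis
    thus "b \<in> underS k a" unfolding underS_def using \<open>a \<noteq> b\<close> by auto
  qed
  have l1: "|A| \<le>o |underS k a|" using card_of_mono1[OF sub] .
  have l2: "|underS k a| <o k" using card_of_underS[OF C aF] .
  obtain g where "iso (Restr k A) k g" using I unfolding ordIso_def by auto
  hence "bij_betw g (Field (Restr k A)) (Field k)" unfolding iso_def by auto
  moreover have "Field (Restr k A) = A" using Refl_Field_Restr2[OF refl AF] .
  ultimately have "|A| =o |Field k|" using card_of_ordIsoI by metis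
  hence "|A| =o k" using card_of_Field_ordIso[OF C] ordIso_transitive by blast
  hence "k <o k" using l1 l2 ordIso_symmetric ordIso_ordLeq_trans ordLeq_ordLess_trans by blast
  thus False using ordLess_irreflexive by blast
qed


theorem proposition2p9:
  fixes kappa :: "'a rel" and lambda :: "'b rel" and mu :: "'c rel" and rho :: "'d rel"
  assumes "Card_order kappa" and "Card_order lambda" and "Card_order mu"
    and "is_cf kappa rho"
    and "partition_rel kappa lambda kappa mu 2"
  shows "partition_rel rho lambda rho mu 2"
  unfolding partition_rel_def
proof (intro allI impI)
  fix c :: "'d \<Rightarrow> 'b \<Rightarrow> nat"
  assume cb: "\<forall>x\<in>Field rho. \<forall>y\<in>Field lambda. c x y < 2"
  have C: "Card_order kappa" by fact
  have W: "Well_order kappa" using C by (simp add: card_order_on_well_order_on)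
  have refl: "Refl kappa" using W by (simp add: order_on_defs)
  have trans: "trans kappa" using W by (simp add: order_on_defs)
  have Wr: "Well_order rho" using assms(4) unfolding is_cf_def by auto
  obtain X where cX: "cofinal_in kappa X" and iX: "rho =o Restr kappa X"
    using assms(4) unfolding is_cf_def by auto
  have XF: "X \<subseteq> Field kappa" using cX unfolding cofinal_in_def by auto
  have FX: "Field (Restr kappa X) = X" using Refl_Field_Restr2[OF refl XF] .
  have WX: "Well_order (Restr kappa X)" using Well_order_Restr[OF W] .
  obtain h where hiso: "iso rho (Restr kappa X) h" using iX unfolding ordIso_def by auto
  have hbij: "bij_betw h (Field rho) X" and
    hord: "\<forall>a\<in>Field rho. \<forall>b\<in>Field rho. ((a, b) \<in> rho) = ((h a, h b) \<in> Restr kappa X)"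
    using hiso FX unfolding iso_iff2 by auto
  define f where "f = (\<lambda>\<alpha>. SOME \<xi>. \<xi> \<in> Field rho \<and> (\<alpha>, h \<xi>) \<in> kappa)"
  have fprop: "f \<alpha> \<in> Field rho \<and> (\<alpha>, h (f \<alpha>)) \<in> kappa" if aF: "\<alpha> \<in> Field kappa" for \<alpha>
  proof -
    obtain b where "b \<in> X" "(\<alpha>, b) \<in> kappa" using cX aF unfolding cofinal_in_def by auto
    then obtain \<xi> where "\<xi> \<in> Field rho" "h \<xi> = b" using hbij unfolding bij_betw_def by auto
    hence "\<exists>\<xi>. \<xi> \<in> Field rho \<and> (\<alpha>, h \<xi>) \<in> kappa" using \<open>(\<alpha>, b) \<in> kappa\<close> by auto
    thus ?thesis unfolding f_def by (rule someI_ex)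
  qed
  define d where "d = (\<lambda>\<alpha> y. c (f \<alpha>) y)"
  have db: "\<forall>x\<in>Field kappa. \<forall>y\<in>Field lambda. d x y < 2"
    using cb fprop unfolding d_def by auto
  obtain A B i where AF: "A \<subseteq> Field kappa" and BF: "B \<subseteq> Field lambda"
    and Aiso: "Restr kappa A =o kappa" and Biso: "Restr lambda B =o mu"
    and const: "\<forall>x\<in>A. \<forall>y\<in>B. d x y = i"
    using assms(5)[unfolded partition_rel_def, THEN spec[of _ d], THEN mp, OF db] by blast
  have Acof: "\<forall>a\<in>Field kappa. \<exists>b\<in>A. (a, b) \<in> kappa"
    using full_subset_cofinal[OF C AF Aiso] .
  define S where "S = f ` A"
  have SF: "S \<subseteq> Field rho" using fprop AF unfolding S_def by auto
  define Y where "Y = h ` S"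
  have YX: "Y \<subseteq> X" using hbij SF unfolding Y_def bij_betw_def by auto
  have Ycof: "cofinal_in kappa Y"
    unfolding cofinal_in_def
  proof
    show "Y \<subseteq> Field kappa" using YX XF by auto
    show "\<forall>a\<in>Field kappa. \<exists>b\<in>Y. (a, b) \<in> kappa"
    proof
      fix a assume "a \<in> Field kappa"
      then obtain b where bA: "b \<in> A" and ab: "(a, b) \<in> kappa" using Acof by auto
      have "(b, h (f b)) \<in> kappa" using fprop bA AF by auto
      hence "(a, h (f b)) \<in> kappa" using ab trans unfolding trans_def by blast
      moreover have "h (f b) \<in> Y" using bA unfolding Y_def S_def by auto
      ultimately show "\<exists>b\<in>Y. (a, b) \<in> kappa" by auto
    qed
  qed
  have l1: "rho \<le>o Restr kappa Y" using assms(4) Ycof unfolding is_cf_def by auto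
  have WS: "Well_order (Restr rho S)" using Well_order_Restr[OF Wr] .
  have WY: "Well_order (Restr kappa Y)" using Well_order_Restr[OF W] .
  have reflr: "Refl rho" using Wr by (simp add: order_on_defs)
  have FS: "Field (Restr rho S) = S" using Refl_Field_Restr2[OF reflr SF] .
  have FY: "Field (Restr kappa Y) = Y" using Refl_Field_Restr2[OF refl] YX XF by auto
  have "iso (Restr rho S) (Restr kappa Y) h"
    unfolding iso_iff2 FS FY
  proof
    show "bij_betw h S Y" unfolding Y_def
      using hbij SF unfolding bij_betw_def by (auto intro: inj_on_subset)
    show "\<forall>a\<in>S. \<forall>b\<in>S. ((a, b) \<in> Restr rho S) = ((h a, h b) \<in> Restr kappa Y)"
      using hord SF hbij unfolding Y_def bij_betw_def by blast
  qed
  hence "Restr rho S =o Restr kappa Y" unfolding ordIso_def using WS WY by auto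
  hence "rho \<le>o Restr rho S" using l1 ordLeq_ordIso_trans ordIso_symmetric by blast
  hence Siso: "Restr rho S =o rho"
    using Restr_ordLeq_self[OF Wr, of S] ordIso_iff_ordLeq by blast
  have "\<forall>x\<in>S. \<forall>y\<in>B. c x y = i" using const unfolding S_def d_def by auto
  thus "\<exists>A B. A \<subseteq> Field rho \<and> B \<subseteq> Field lambda \<and>
               (Restr rho A, rho) \<in> ordIso \<and> (Restr lambda B, mu) \<in> ordIso \<and>
               (\<exists>i. \<forall>x\<in>A. \<forall>y\<in>B. c x y = i)"
    using SF BF Siso Biso by blast
qed

end
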